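(* Let $k$ be a positive integer and let $\varepsilon>0$. Every finite graph $G$ with treewidth less than $k$ is a minor of some finite graph $\tilde G$ with growth $f_{\tilde G}(r)\leq (162(k+1)+\varepsilon)r+1$ for every positive integer $r$.
   Context: The growth of a finite graph $G$ is the function $f_G\colon\mathbb{N}\to\mathbb{N}$ where $f_G(r)$ is the maximum of $|V(H)|$ over all subgraphs $H$ of $G$ of radius at most $r$. Treewidth is the minimum, over tree-decompositions (bags indexed by the nodes of a tree, each edge contained in some bag, the bags containing any given vertex forming a non-empty subtree), of the maximum bag size minus $1$. A graph $H$ is a minor of $G$ if $H$ is isomorphic to a graph obtained from a subgraph of $G$ by contracting edges. *)

theory Defs
  imports Complex_Main
begin

definition graph :: "'a set \<Rightarrow> 'a set set \<Rightarrow> bool" where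
  "graph V E \<longleftrightarrow> finite V \<and> (\<forall>e\<in>E. \<exists>u v. e = {u, v} \<and> u \<noteq> v \<and> u \<in> V \<and> v \<in> V)"

definition subgraph :: "'a set \<Rightarrow> 'a set set \<Rightarrow> 'a set \<Rightarrow> 'a set set \<Rightarrow> bool" where
  "subgraph V' E' V E \<longleftrightarrow> graph V' E' \<and> V' \<subseteq> V \<and> E' \<subseteq> E"

definition walk :: "'a set \<Rightarrow> 'a set set \<Rightarrow> 'a list \<Rightarrow> bool" where
  "walk V E xs \<longleftrightarrow> xs \<noteq> [] \<and> set xs \<subseteq> V \<and> (\<forall>i. Suc i < length xs \<longrightarrow> {xs ! i, xs ! Suc i} \<in> E)"

definition dist_le :: "'a set \<Rightarrow> 'a set set \<Rightarrow> 'a \<Rightarrow> 'a \<Rightarrow> nat \<Rightarrow> bool" where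
  "dist_le V E u v r \<longleftrightarrow> (\<exists>xs. walk V E xs \<and> hd xs = u \<and> last xs = v \<and> length xs \<le> Suc r)"

definition connected_graph :: "'a set \<Rightarrow> 'a set set \<Rightarrow> bool" where
  "connected_graph V E \<longleftrightarrow> (\<forall>u\<in>V. \<forall>v\<in>V. \<exists>xs. walk V E xs \<and> hd xs = u \<and> last xs = v)"

definition radius_le :: "'a set \<Rightarrow> 'a set set \<Rightarrow> nat \<Rightarrow> bool" where
  "radius_le V E r \<longleftrightarrow> (\<exists>c\<in>V. \<forall>v\<in>V. dist_le V E c v r)"

definition growth :: "'a set \<Rightarrow> 'a set set \<Rightarrow> nat \<Rightarrow> nat" where
  "growth V E r = Max ({card V' | V' E'. subgraph V' E' V E \<and> radius_le V' E' r} \<union> {0})"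

definition tree :: "'b set \<Rightarrow> 'b set set \<Rightarrow> bool" where
  "tree I F \<longleftrightarrow> graph I F \<and> connected_graph I F \<and> card F + 1 = card I"

definition tree_decomposition ::
  "'a set \<Rightarrow> 'a set set \<Rightarrow> nat set \<Rightarrow> nat set set \<Rightarrow> (nat \<Rightarrow> 'a set) \<Rightarrow> bool" where
  "tree_decomposition V E I F B \<longleftrightarrow>
     tree I F \<and> (\<forall>i\<in>I. B i \<subseteq> V) \<and> (\<forall>e\<in>E. \<exists>i\<in>I. e \<subseteq> B i) \<and>
     (\<forall>v\<in>V. {i\<in>I. v \<in> B i} \<noteq> {} \<and>
        connected_graph {i\<in>I. v \<in> B i} {f\<in>F. f \<subseteq> {i\<in>I. v \<in> B i}})"

definition treewidth :: "'a set \<Rightarrow> 'a set set \<Rightarrow> int" where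
  "treewidth V E = int (LEAST w. \<exists>I F B. tree_decomposition V E I F B \<and> (\<forall>i\<in>I. card (B i) \<le> w)) - 1"

definition contract :: "'a set \<times> 'a set set \<Rightarrow> 'a \<Rightarrow> 'a \<Rightarrow> 'a set \<times> 'a set set" where
  "contract G u v = (fst G - {v},
     {e \<in> snd G. v \<notin> e} \<union> {{u, w} | w. {v, w} \<in> snd G \<and> w \<noteq> u})"

definition contract_step :: "'a set \<times> 'a set set \<Rightarrow> 'a set \<times> 'a set set \<Rightarrow> bool" where
  "contract_step G G' \<longleftrightarrow> (\<exists>u v. {u, v} \<in> snd G \<and> u \<noteq> v \<and> G' = contract G u v)"

definition isomorphic :: "'a set \<Rightarrow> 'a set set \<Rightarrow> 'b set \<Rightarrow> 'b set set \<Rightarrow> bool" where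
  "isomorphic V E V' E' \<longleftrightarrow> (\<exists>f. bij_betw f V V' \<and>
     (\<forall>u\<in>V. \<forall>v\<in>V. {u, v} \<in> E \<longleftrightarrow> {f u, f v} \<in> E'))"

definition minor :: "'a set \<Rightarrow> 'a set set \<Rightarrow> 'b set \<Rightarrow> 'b set set \<Rightarrow> bool" where
  "minor VH EH VG EG \<longleftrightarrow> (\<exists>V' E' G''. subgraph V' E' VG EG \<and>
     contract_step\<^sup>*\<^sup>* (V', E') G'' \<and> isomorphic VH EH (fst G'') (snd G''))"

end

theory Submission
  imports Defs
begin

fun tot :: "nat \<Rightarrow> nat \<Rightarrow> nat" where
  "tot N 0 = 1" | "tot N (Suc h) = 3*N*tot N h + 1"

definition dl :: "nat \<Rightarrow> nat \<Rightarrow> nat" where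
  "dl N h = (case h of 0 \<Rightarrow> 0 | Suc h' \<Rightarrow> tot N h')"
definition ss :: "nat \<Rightarrow> nat \<Rightarrow> nat" where "ss N h = N * dl N h + 1"
definition qlen :: "nat \<Rightarrow> nat \<Rightarrow> nat" where "qlen N h = 2 * N * dl N h + 1"
definition att :: "nat \<Rightarrow> nat \<Rightarrow> nat \<Rightarrow> nat" where "att N h y = ss N h + y * dl N h"

definition UV :: "nat \<Rightarrow> nat \<Rightarrow> (nat list \<times> nat) set" where
  "UV N Dp = {(xs,j). length xs \<le> Dp \<and> set xs \<subseteq> {..<N} \<and> j < qlen N (Dp - length xs)}"

definition par :: "nat \<Rightarrow> nat \<Rightarrow> nat list \<times> nat \<Rightarrow> nat list \<times> nat" where
  "par N Dp z = (if 0 < snd z then (fst z, snd z - 1) else if fst z = [] then ([],0)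
      else (butlast (fst z), att N (Dp - length (fst z) + 1) (last (fst z))))"

definition Dn :: "nat \<Rightarrow> nat \<Rightarrow> nat list \<times> nat \<Rightarrow> nat \<Rightarrow> (nat list \<times> nat) set" where
  "Dn N Dp a R = {z \<in> UV N Dp. \<exists>j\<le>R. (par N Dp ^^ j) z = a}"

lemma tot_pos: "tot N h > 0" by (cases h) auto

lemma tot_eq: "tot N h = 3 * N * dl N h + 1"
  by (cases h) (auto simp: dl_def)

lemma tot_mono_Suc: "tot N h \<le> tot N (Suc h)"
proof (cases "N = 0")
  case True then show ?thesis by (cases h) auto
next
  case False
  have "tot N h \<le> 3 * N * tot N h" using False by simp
  then show ?thesis by (simp only: tot.simps(2))
qed

lemma tot_mono: "h \<le> h' \<Longrightarrow> tot N h \<le> tot N h'"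
  by (induction h' rule: dec_induct) (auto intro: order_trans[OF _ tot_mono_Suc] simp del: tot.simps)

lemma dl_mono: "h \<le> h' \<Longrightarrow> dl N h \<le> dl N h'"
  by (cases h; cases h') (auto simp: dl_def intro: tot_mono)

lemma qlen_mono: "h \<le> h' \<Longrightarrow> qlen N h \<le> qlen N h'"
  unfolding qlen_def using dl_mono[of h h' N] by simp

lemma finite_UV: "finite (UV N Dp)"
proof -
  have "UV N Dp \<subseteq> {xs. set xs \<subseteq> {..<N} \<and> length xs \<le> Dp} \<times> {..<qlen N Dp}"
  proof
    fix z assume "z \<in> UV N Dp"
    then show "z \<in> {xs. set xs \<subseteq> {..<N} \<and> length xs \<le> Dp} \<times> {..<qlen N Dp}"
      using qlen_mono[of "Dp - length (fst z)" Dp N] by (auto simp: UV_def)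
  qed
  moreover have "finite ({xs. set xs \<subseteq> {..<N} \<and> length xs \<le> Dp} \<times> {..<qlen N Dp})"
    using finite_lists_length_le[of "{..<N}" Dp] by blast
  ultimately show ?thesis by (rule finite_subset)
qed

lemma par_UV: "z \<in> UV N Dp \<Longrightarrow> par N Dp z \<in> UV N Dp"
proof -
  assume z: "z \<in> UV N Dp"
  obtain xs j where zz: "z = (xs, j)" by (cases z)
  show ?thesis
  proof (cases "0 < j")
    case True then show ?thesis using z zz by (auto simp: UV_def par_def)
  next
    case False
    show ?thesis
    proof (cases "xs = []")
      case True then show ?thesis using False z zz by (auto simp: UV_def par_def qlen_def)
    next
      case ne: False
      define h where "h = Dp - length xs"
      have len: "length xs \<le> Dp" and st: "set xs \<subseteq> {..<N}" using z zz by (auto simp: UV_def)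
      have y: "last xs < N" using st last_in_set[OF ne] by blast
      have e: "Dp - length (butlast xs) = Suc h" using len ne h_def by (cases xs rule: rev_cases) auto
      have "att N (Suc h) (last xs) < qlen N (Suc h)"
      proof -
        have "last xs * tot N h < N * tot N h" using y tot_pos[of N h] by simp
        then show ?thesis by (simp add: att_def ss_def qlen_def dl_def)
      qed
      then show ?thesis using False ne z zz len st e h_def
        by (auto simp: UV_def par_def dest: in_set_butlastD)
    qed
  qed
qed

lemma parpow_UV: "z \<in> UV N Dp \<Longrightarrow> (par N Dp ^^ m) z \<in> UV N Dp"
  by (induction m) (auto intro: par_UV)

lemma decomp:
  assumes "z \<in> UV N Dp" "(par N Dp ^^ m) z = (xs, j0)"
  shows "(fst z = xs \<and> j0 \<le> snd z \<and> snd z \<le> j0 + m) \<or>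
    (\<exists>y m'. y < N \<and> j0 \<le> att N (Dp - length xs) y \<and> att N (Dp - length xs) y - j0 + 1 + m' \<le> m
       \<and> (par N Dp ^^ m') z = (xs @ [y], 0))"
  using assms
proof (induction m arbitrary: z)
  case 0 then show ?case by auto
next
  case (Suc m)
  have pz: "par N Dp z \<in> UV N Dp" using Suc.prems(1) by (rule par_UV)
  have "(par N Dp ^^ m) (par N Dp z) = (xs, j0)" using Suc.prems(2) by (simp only: funpow_Suc_right comp_def)
  from Suc.IH[OF pz this] show ?case
  proof
    assume c1: "fst (par N Dp z) = xs \<and> j0 \<le> snd (par N Dp z) \<and> snd (par N Dp z) \<le> j0 + m"
    obtain zs j where zz: "z = (zs, j)" by (cases z)
    show ?case
    proof (cases "0 < j")
      case True then show ?thesis using c1 zz by (auto simp: par_def)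
    next
      case False
      show ?thesis
      proof (cases "zs = []")
        case True then show ?thesis using c1 zz False by (auto simp: par_def)
      next
        case ne: False
        have len: "length zs \<le> Dp" and st: "set zs \<subseteq> {..<N}" using Suc.prems(1) zz by (auto simp: UV_def)
        have y: "last zs < N" using st last_in_set[OF ne] by blast
        have xs: "xs = butlast zs" and a: "j0 \<le> att N (Dp - length zs + 1) (last zs)"
          "att N (Dp - length zs + 1) (last zs) \<le> j0 + m"
          using c1 zz False ne by (auto simp: par_def)
        have zs: "zs = xs @ [last zs]" using xs ne by simp
        have e: "Dp - length xs = Dp - length zs + 1" using len ne xs by (cases zs rule: rev_cases) auto
        show ?thesis
          apply (rule disjI2)
          apply (rule exI[of _ "last zs"], rule exI[of _ 0])
          using y a e zz False zs by auto
      qed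
    qed
  next
    assume "\<exists>y m'. y < N \<and> j0 \<le> att N (Dp - length xs) y \<and> att N (Dp - length xs) y - j0 + 1 + m' \<le> m
       \<and> (par N Dp ^^ m') (par N Dp z) = (xs @ [y], 0)"
    then obtain y m' where "y < N" "j0 \<le> att N (Dp - length xs) y" "att N (Dp - length xs) y - j0 + 1 + m' \<le> m"
       "(par N Dp ^^ m') (par N Dp z) = (xs @ [y], 0)" by blast
    moreover have "(par N Dp ^^ Suc m') z = (xs @ [y], 0)"
      using \<open>(par N Dp ^^ m') (par N Dp z) = (xs @ [y], 0)\<close> by (simp only: funpow_Suc_right comp_def)
    ultimately show ?case
      apply -
      apply (rule disjI2)
      apply (rule exI[of _ y], rule exI[of _ "Suc m'"])
      by auto
  qed
qed

lemma Dn_cover: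
  "Dn N Dp (xs, j0) R \<subseteq> ((\<lambda>j'. (xs, j')) ` ({j0..j0+R} \<inter> {..<qlen N (Dp - length xs)})) \<union>
     (\<Union>y\<in>{y. y < N \<and> j0 \<le> att N (Dp - length xs) y \<and> att N (Dp - length xs) y \<le> j0 + R}.
        Dn N Dp (xs @ [y], 0) (R - (att N (Dp - length xs) y - j0) - 1))"
proof
  fix z assume z: "z \<in> Dn N Dp (xs, j0) R"
  then obtain j where j: "j \<le> R" "(par N Dp ^^ j) z = (xs, j0)" and zu: "z \<in> UV N Dp"
    by (auto simp: Dn_def)
  from decomp[OF zu j(2)] show "z \<in> ((\<lambda>j'. (xs, j')) ` ({j0..j0+R} \<inter> {..<qlen N (Dp - length xs)})) \<union>
     (\<Union>y\<in>{y. y < N \<and> j0 \<le> att N (Dp - length xs) y \<and> att N (Dp - length xs) y \<le> j0 + R}.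
        Dn N Dp (xs @ [y], 0) (R - (att N (Dp - length xs) y - j0) - 1))"
  proof
    assume "fst z = xs \<and> j0 \<le> snd z \<and> snd z \<le> j0 + j"
    then show ?thesis using zu j(1) by (cases z) (auto simp: UV_def)
  next
    assume "\<exists>y m'. y < N \<and> j0 \<le> att N (Dp - length xs) y \<and> att N (Dp - length xs) y - j0 + 1 + m' \<le> j
       \<and> (par N Dp ^^ m') z = (xs @ [y], 0)"
    then obtain y m' where "y < N" "j0 \<le> att N (Dp - length xs) y" "att N (Dp - length xs) y - j0 + 1 + m' \<le> j"
       "(par N Dp ^^ m') z = (xs @ [y], 0)" by blast
    then show ?thesis using zu j(1) unfolding Dn_def
      by (intro UnI2 UN_I[of y]) (auto intro!: exI[of _ m'])
  qed
qed

lemma finite_Dn: "finite (Dn N Dp a R)"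
  using finite_UV[of N Dp] by (rule rev_finite_subset) (auto simp: Dn_def)

lemma Dn_empty: "a \<notin> UV N Dp \<Longrightarrow> Dn N Dp a R = {}"
  using parpow_UV by (fastforce simp: Dn_def)

lemma card_P: "card ((\<lambda>j'. (xs, j')) ` ({j0..j0+R} \<inter> {..<q})) \<le> R + 1"
     "card ((\<lambda>j'. (xs, j')) ` ({j0..j0+R} \<inter> {..<q})) \<le> q"
proof -
  have "card ((\<lambda>j'. (xs, j')) ` ({j0..j0+R} \<inter> {..<q})) \<le> card ({j0..j0+R} \<inter> {..<q})"
    by (rule card_image_le) simp
  moreover have "card ({j0..j0+R} \<inter> {..<q}) \<le> card {j0..j0+R}" by (rule card_mono) auto
  moreover have "card ({j0..j0+R} \<inter> {..<q}) \<le> card {..<q}" by (rule card_mono) auto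
  ultimately show "card ((\<lambda>j'. (xs, j')) ` ({j0..j0+R} \<inter> {..<q})) \<le> R + 1"
     "card ((\<lambda>j'. (xs, j')) ` ({j0..j0+R} \<inter> {..<q})) \<le> q" by auto
qed

lemma card_Dn_cover:
  "card (Dn N Dp (xs, j0) R) \<le> card ((\<lambda>j'. (xs, j')) ` ({j0..j0+R} \<inter> {..<qlen N (Dp - length xs)})) +
     (\<Sum>y\<in>{y. y < N \<and> j0 \<le> att N (Dp - length xs) y \<and> att N (Dp - length xs) y \<le> j0 + R}.
        card (Dn N Dp (xs @ [y], 0) (R - (att N (Dp - length xs) y - j0) - 1)))"
proof -
  let ?P = "(\<lambda>j'. (xs, j')) ` ({j0..j0+R} \<inter> {..<qlen N (Dp - length xs)})"
  let ?Y = "{y. y < N \<and> j0 \<le> att N (Dp - length xs) y \<and> att N (Dp - length xs) y \<le> j0 + R}"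
  let ?C = "\<lambda>y. Dn N Dp (xs @ [y], 0) (R - (att N (Dp - length xs) y - j0) - 1)"
  have "card (Dn N Dp (xs, j0) R) \<le> card (?P \<union> (\<Union>y\<in>?Y. ?C y))"
    by (rule card_mono[OF _ Dn_cover]) (auto intro: finite_Dn)
  also have "\<dots> \<le> card ?P + card (\<Union>y\<in>?Y. ?C y)" by (rule card_Un_le)
  also have "card (\<Union>y\<in>?Y. ?C y) \<le> (\<Sum>y\<in>?Y. card (?C y))" by (rule card_UN_le) auto
  finally show ?thesis by simp
qed

lemma Dn_claim:
  "length xs + h = Dp \<Longrightarrow> card (Dn N Dp (xs, j0) R) \<le> tot N h \<and>
     (j0 + R < ss N h \<longrightarrow> card (Dn N Dp (xs, j0) R) \<le> R + 1)"
proof (induction h arbitrary: xs j0 R)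
  case 0
  let ?Y = "{y. y < N \<and> j0 \<le> att N (Dp - length xs) y \<and> att N (Dp - length xs) y \<le> j0 + R}"
  have "\<forall>y. (xs @ [y], 0) \<notin> UV N Dp" using 0 by (auto simp: UV_def)
  then have s0: "(\<Sum>y\<in>?Y. card (Dn N Dp (xs @ [y], 0) (R - (att N (Dp - length xs) y - j0) - 1))) = 0"
    by (simp add: Dn_empty)
  have "Dp - length xs = 0" using 0 by simp
  then show ?case using card_Dn_cover[of N Dp xs j0 R] s0 card_P[of xs j0 R "qlen N (Dp - length xs)"]
    by (simp add: qlen_def dl_def)
next
  case (Suc h)
  let ?Y = "{y. y < N \<and> j0 \<le> att N (Dp - length xs) y \<and> att N (Dp - length xs) y \<le> j0 + R}"
  let ?S = "(\<Sum>y\<in>?Y. card (Dn N Dp (xs @ [y], 0) (R - (att N (Dp - length xs) y - j0) - 1)))"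
  have hh: "Dp - length xs = Suc h" using Suc.prems by simp
  have "?S \<le> (\<Sum>y\<in>?Y. tot N h)"
    by (rule sum_mono) (use Suc.IH[of "xs @ [_]"] Suc.prems in auto)
  also have "\<dots> = card ?Y * tot N h" by simp
  also have "\<dots> \<le> N * tot N h"
  proof -
    have "card ?Y \<le> card {..<N}" by (rule card_mono) auto
    then show ?thesis by simp
  qed
  finally have S: "?S \<le> N * tot N h" .
  have "card (Dn N Dp (xs, j0) R) \<le> tot N (Suc h)"
    using card_Dn_cover[of N Dp xs j0 R] S card_P(2)[of xs j0 R "qlen N (Dp - length xs)"] hh
    by (simp add: qlen_def dl_def)
  moreover have "j0 + R < ss N (Suc h) \<Longrightarrow> card (Dn N Dp (xs, j0) R) \<le> R + 1"
  proof -
    assume a: "j0 + R < ss N (Suc h)"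
    have "?Y = {}" using a hh by (auto simp: att_def)
    have "card (Dn N Dp (xs, j0) R) \<le> card ((\<lambda>j'. (xs, j')) ` ({j0..j0+R} \<inter> {..<qlen N (Dp - length xs)})) + 0"
      using card_Dn_cover[of N Dp xs j0 R] unfolding \<open>?Y = {}\<close> sum.empty .
    then show ?thesis using card_P(1)[of xs j0 R "qlen N (Dp - length xs)"]
      by simp
  qed
  ultimately show ?case by blast
qed

lemma Dn_lin:
  assumes len: "length xs \<le> Dp"
  shows "card (Dn N Dp (xs, j0) R) \<le> 5 * R + 2"
proof (cases "Dp - length xs")
  case 0
  then show ?thesis using Dn_claim[of xs "Dp - length xs" Dp N j0 R] len by simp
next
  case (Suc h)
  let ?Y = "{y. y < N \<and> j0 \<le> att N (Dp - length xs) y \<and> att N (Dp - length xs) y \<le> j0 + R}"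
  let ?f = "\<lambda>y. card (Dn N Dp (xs @ [y], 0) (R - (att N (Dp - length xs) y - j0) - 1))"
  have lh: "length (xs @ [y]) + h = Dp" for y using Suc len by simp
  have f1: "?f y \<le> tot N h" for y using Dn_claim[OF lh] by blast
  have f2: "?f y \<le> 3 * R + 1" for y
  proof -
    let ?R = "R - (att N (Dp - length xs) y - j0) - 1"
    show ?thesis
    proof (cases "?R < ss N h")
      case True
      have "card (Dn N Dp (xs @ [y], 0) ?R) \<le> ?R + 1" using True Dn_claim[of "xs @ [y]" h Dp N 0 ?R] lh[of y] by simp
      moreover have "?R \<le> R" by simp
      ultimately show ?thesis by linarith
    next
      case False
      then have "tot N h \<le> 3 * ?R + 1" using tot_eq[of N h] by (simp add: ss_def)
      then show ?thesis using f1[of y] by simp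
    qed
  qed
  have att: "att N (Dp - length xs) y = ss N (Suc h) + y * tot N h" for y
    using Suc by (simp add: att_def dl_def)
  have fin: "finite ?Y" by simp
  have S: "sum ?f ?Y \<le> 4 * R + 1"
  proof (cases "?Y = {}")
    case True then show ?thesis by (simp only: sum.empty)
  next
    case False
    define ym where "ym = Max ?Y"
    define yn where "yn = Min ?Y"
    have ymY: "ym \<in> ?Y" using False fin ym_def by (meson Max_in)
    have ynY: "yn \<in> ?Y" using False fin yn_def by (meson Min_in)
    have sub: "?Y - {ym} \<subseteq> {yn..<ym}"
    proof
      fix y assume "y \<in> ?Y - {ym}"
      then have "y \<in> ?Y" "y \<noteq> ym" by auto
      moreover have "y \<le> ym" "yn \<le> y" using \<open>y \<in> ?Y\<close> fin ym_def yn_def by auto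
      ultimately show "y \<in> {yn..<ym}" by auto
    qed
    have cY: "card (?Y - {ym}) \<le> ym - yn" using card_mono[OF _ sub] by simp
    have "ss N (Suc h) + ym * tot N h \<le> j0 + R" "j0 \<le> ss N (Suc h) + yn * tot N h"
      using ymY ynY att by auto
    then have "ym * tot N h - yn * tot N h \<le> R" by linarith
    then have d: "(ym - yn) * tot N h \<le> R" by (simp add: diff_mult_distrib)
    have e1: "sum ?f ?Y = ?f ym + sum ?f (?Y - {ym})" using fin ymY by (rule sum.remove)
    have e2: "sum ?f (?Y - {ym}) \<le> (\<Sum>y\<in>?Y - {ym}. tot N h)" by (rule sum_mono) (rule f1)
    have e3: "(\<Sum>y\<in>?Y - {ym}. tot N h) = card (?Y - {ym}) * tot N h" by (simp only: sum_constant of_nat_id)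
    have e4: "card (?Y - {ym}) * tot N h \<le> (ym - yn) * tot N h" using cY by (rule mult_le_mono1)
    show ?thesis using e1 e2 e3 e4 d f2[of ym] by linarith
  qed
  show ?thesis using card_Dn_cover[of N Dp xs j0 R] card_P(1)[of xs j0 R "qlen N (Dp - length xs)"] S
    by linarith
qed

lemma Dn_mono: "R \<le> R' \<Longrightarrow> Dn N Dp a R \<subseteq> Dn N Dp a R'"
  unfolding Dn_def using le_trans by blast

lemma Dn_up: "z \<in> Dn N Dp a R \<Longrightarrow> z \<in> Dn N Dp (par N Dp a) (Suc R)"
  unfolding Dn_def by (auto simp del: funpow.simps simp add: funpow_Suc_right[symmetric]) (metis Suc_le_mono funpow.simps(2) o_apply)

lemma Dn_upn: "z \<in> Dn N Dp a R \<Longrightarrow> z \<in> Dn N Dp ((par N Dp ^^ m) a) (R + m)"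
  by (induction m) (auto dest: Dn_up)

lemma Dn_par: "z \<in> Dn N Dp a R \<Longrightarrow> par N Dp z \<in> Dn N Dp (par N Dp a) (Suc R)"
proof -
  assume z: "z \<in> Dn N Dp a R"
  then obtain j where j: "j \<le> R" "(par N Dp ^^ j) z = a" and zu: "z \<in> UV N Dp" by (auto simp: Dn_def)
  show ?thesis
  proof (cases j)
    case 0 then show ?thesis using j zu par_UV by (auto simp: Dn_def)
  next
    case (Suc j')
    then have "(par N Dp ^^ j') (par N Dp z) = a" using j by (simp only: funpow_Suc_right comp_def)
    then have "par N Dp z \<in> Dn N Dp a R" using j Suc zu par_UV unfolding Dn_def
      by (auto intro!: exI[of _ j'])
    then show ?thesis by (rule Dn_up)
  qed
qed

lemma Dn_child: "z \<in> Dn N Dp a R \<Longrightarrow> z' \<in> UV N Dp \<Longrightarrow> par N Dp z' = z \<Longrightarrow> z' \<in> Dn N Dp a (Suc R)"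
  unfolding Dn_def by (auto simp del: funpow.simps) (metis Suc_le_mono funpow_Suc_right o_apply)

lemma lazy_walk_Dn:
  assumes "\<forall>i<length us. us ! i \<in> UV N Dp"
    and "\<forall>i. Suc i < length us \<longrightarrow> us ! Suc i = us ! i \<or> par N Dp (us ! i) = us ! Suc i \<or> par N Dp (us ! Suc i) = us ! i"
  shows "i < length us \<Longrightarrow> us ! i \<in> Dn N Dp ((par N Dp ^^ i) (us ! 0)) (2 * i)"
proof (induction i)
  case 0 then show ?case using assms(1) by (auto simp: Dn_def)
next
  case (Suc i)
  then have ih: "us ! i \<in> Dn N Dp ((par N Dp ^^ i) (us ! 0)) (2 * i)" by simp
  let ?a = "(par N Dp ^^ i) (us ! 0)"
  have pa: "(par N Dp ^^ Suc i) (us ! 0) = par N Dp ?a" by simp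
  have "us ! Suc i \<in> Dn N Dp (par N Dp ?a) (Suc (Suc (2 * i)))"
    using assms(2)[rule_format, OF Suc.prems]
  proof (elim disjE)
    assume "us ! Suc i = us ! i"
    then show ?thesis using Dn_up[OF ih] Dn_mono[of "Suc (2*i)" "Suc (Suc (2 * i))" N Dp "par N Dp ?a"] by auto
  next
    assume "par N Dp (us ! i) = us ! Suc i"
    then show ?thesis using Dn_par[OF ih] Dn_mono[of "Suc (2*i)" "Suc (Suc (2 * i))" N Dp "par N Dp ?a"] by auto
  next
    assume "par N Dp (us ! Suc i) = us ! i"
    then show ?thesis using Dn_up[OF Dn_child[OF ih]] assms(1) Suc.prems by auto
  qed
  then show ?case using pa by simp
qed


definition conn :: "'b set \<Rightarrow> 'b set set \<Rightarrow> bool" where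
  "conn X F \<longleftrightarrow> (\<forall>x\<in>X. \<forall>y\<in>X. (\<lambda>p q. p \<in> X \<and> q \<in> X \<and> {p,q} \<in> F)\<^sup>*\<^sup>* x y)"

definition good :: "'a set \<Rightarrow> 'a set set \<Rightarrow> 'b set \<Rightarrow> 'b set set \<Rightarrow> ('a \<Rightarrow> 'b set) \<Rightarrow> bool" where
  "good V E W F X \<longleftrightarrow> graph W F \<and> (\<forall>v\<in>V. X v \<noteq> {}) \<and> \<Union>(X ` V) = W \<and>
     (\<forall>u\<in>V. \<forall>v\<in>V. u \<noteq> v \<longrightarrow> X u \<inter> X v = {}) \<and> (\<forall>v\<in>V. conn (X v) F) \<and>
     (\<forall>u\<in>V. \<forall>v\<in>V. u \<noteq> v \<longrightarrow> ((\<exists>p\<in>X u. \<exists>q\<in>X v. {p,q} \<in> F) \<longleftrightarrow> {u,v} \<in> E))"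

lemma graph_edge: "graph W F \<Longrightarrow> {p,q} \<in> F \<Longrightarrow> p \<noteq> q \<and> p \<in> W \<and> q \<in> W"
  unfolding graph_def by (metis doubleton_eq_iff)

lemma graph_no_loop: "graph W F \<Longrightarrow> {p} \<notin> F"
  unfolding graph_def by (metis doubleton_eq_iff insert_absorb2 singleton_insert_inj_eq)

lemma good_step:
  assumes g: "good V E W F X" and v: "v \<in> V" and ab: "a \<in> X v" "b \<in> X v" "{a,b} \<in> F"
  defines "F' \<equiv> {e \<in> F. b \<notin> e} \<union> {{a, w} | w. {b, w} \<in> F \<and> w \<noteq> a}"
  shows "good V E (W - {b}) F' (X(v := X v - {b}))"
proof -
  have gr: "graph W F" using g by (simp add: good_def)
  have abW: "a \<noteq> b" "a \<in> W" "b \<in> W" using graph_edge[OF gr ab(3)] by auto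
  have disj: "\<And>u w. u \<in> V \<Longrightarrow> w \<in> V \<Longrightarrow> u \<noteq> w \<Longrightarrow> X u \<inter> X w = {}" using g by (simp add: good_def)
  have inb: "\<And>u. u \<in> V \<Longrightarrow> b \<in> X u \<Longrightarrow> u = v" using disj v ab by blast
  have ina: "\<And>u. u \<in> V \<Longrightarrow> a \<in> X u \<Longrightarrow> u = v" using disj v ab by blast
  let ?X = "X(v := X v - {b})"
  have g1: "graph (W - {b}) F'"
    unfolding graph_def
  proof
    show "finite (W - {b})" using gr by (simp add: graph_def)
  next
    show "\<forall>e\<in>F'. \<exists>u w. e = {u, w} \<and> u \<noteq> w \<and> u \<in> W - {b} \<and> w \<in> W - {b}"
    proof
      fix e assume "e \<in> F'"
      then consider "e \<in> F" "b \<notin> e" | w where "e = {a,w}" "{b,w} \<in> F" "w \<noteq> a" unfolding F'_def by blast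
      then show "\<exists>u w. e = {u, w} \<and> u \<noteq> w \<and> u \<in> W - {b} \<and> w \<in> W - {b}"
      proof cases
        case 1
        then obtain u w where "e = {u,w}" "u \<noteq> w" "u \<in> W" "w \<in> W" using gr 1(1) unfolding graph_def by blast
        then show ?thesis using 1 by auto
      next
        case 2
        then show ?thesis using graph_edge[OF gr 2(2)] abW by auto
      qed
    qed
  qed
  have g2: "\<forall>u\<in>V. ?X u \<noteq> {}" using g ab abW by (auto simp: good_def)
  have g3: "\<Union>(?X ` V) = W - {b}"
  proof -
    have "\<Union>(X ` V) = W" using g by (simp add: good_def)
    then show ?thesis using inb v by auto
  qed
  have g4: "\<forall>u\<in>V. \<forall>w\<in>V. u \<noteq> w \<longrightarrow> ?X u \<inter> ?X w = {}" using disj by auto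
  have g5: "\<forall>u\<in>V. conn (?X u) F'"
  proof
    fix u assume u: "u \<in> V"
    have cu: "conn (X u) F" using g u by (simp add: good_def)
    show "conn (?X u) F'"
    proof (cases "u = v")
      case False
      then have bn: "b \<notin> X u" using inb u by auto
      show ?thesis unfolding conn_def
      proof (intro ballI)
        fix x y assume "x \<in> ?X u" "y \<in> ?X u"
        then have "(\<lambda>p q. p \<in> X u \<and> q \<in> X u \<and> {p,q} \<in> F)\<^sup>*\<^sup>* x y" using cu False by (auto simp: conn_def)
        then show "(\<lambda>p q. p \<in> ?X u \<and> q \<in> ?X u \<and> {p,q} \<in> F')\<^sup>*\<^sup>* x y"
          by (rule mono_rtranclp[rule_format, rotated]) (use False bn in \<open>auto simp: F'_def\<close>)
      qed
    next
      case True
      define h where "h z = (if z = b then a else z)" for z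
      let ?R = "\<lambda>p q. p \<in> X v \<and> q \<in> X v \<and> {p,q} \<in> F"
      let ?R' = "\<lambda>p q. p \<in> X v - {b} \<and> q \<in> X v - {b} \<and> {p,q} \<in> F'"
      have hm: "\<And>z. z \<in> X v \<Longrightarrow> h z \<in> X v - {b}" using ab abW by (auto simp: h_def)
      have st: "?R'\<^sup>*\<^sup>* (h p) (h q)" if "?R p q" for p q
      proof (cases "h p = h q")
        case True then show ?thesis by simp
      next
        case False
        have "{h p, h q} \<in> F'"
        proof (cases "p = b")
          case True
          then have "q \<noteq> b" "q \<noteq> a" using False by (auto simp: h_def)
          then show ?thesis using that True by (auto simp: F'_def h_def)
        next
          case pb: False
          show ?thesis
          proof (cases "q = b")
            case True
            then have "p \<noteq> a" using False pb by (auto simp: h_def)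
            then have "{a, p} \<in> F'" using that True unfolding F'_def by (auto simp: insert_commute)
            then show ?thesis using True pb by (simp add: h_def insert_commute)
          next
            case False
            then show ?thesis using that pb by (auto simp: F'_def h_def)
          qed
        qed
        then show ?thesis using hm that by auto
      qed
      show ?thesis unfolding conn_def
      proof (intro ballI)
        fix x y assume xy: "x \<in> ?X u" "y \<in> ?X u"
        then have "?R\<^sup>*\<^sup>* x y" using cu True by (auto simp: conn_def)
        then have "?R'\<^sup>*\<^sup>* (h x) (h y)"
        proof (induction rule: rtranclp_induct)
          case base then show ?case by simp
        next
          case (step y z)
          from step.IH st[OF step.hyps(2)] show ?case by (rule rtranclp_trans)
        qed
        moreover have "h x = x" "h y = y" using xy True by (auto simp: h_def)
        ultimately show "(\<lambda>p q. p \<in> ?X u \<and> q \<in> ?X u \<and> {p,q} \<in> F')\<^sup>*\<^sup>* x y" using True by simp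
      qed
    qed
  qed
  have g6: "\<forall>u\<in>V. \<forall>w\<in>V. u \<noteq> w \<longrightarrow> ((\<exists>p\<in>?X u. \<exists>q\<in>?X w. {p,q} \<in> F') \<longleftrightarrow> {u,w} \<in> E)"
  proof (intro ballI impI)
    fix u w assume u: "u \<in> V" and w: "w \<in> V" and uw: "u \<noteq> w"
    have old: "(\<exists>p\<in>X u. \<exists>q\<in>X w. {p,q} \<in> F) \<longleftrightarrow> {u,w} \<in> E" using g u w uw by (simp add: good_def)
    have sub: "\<And>z. ?X z \<subseteq> X z" by auto
    show "(\<exists>p\<in>?X u. \<exists>q\<in>?X w. {p,q} \<in> F') \<longleftrightarrow> {u,w} \<in> E"
    proof
      assume "\<exists>p\<in>?X u. \<exists>q\<in>?X w. {p,q} \<in> F'"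
      then obtain p q where pq: "p \<in> ?X u" "q \<in> ?X w" "{p,q} \<in> F'" by blast
      then have pq': "p \<in> X u" "q \<in> X w" using sub by blast+
      from pq(3) consider "{p,q} \<in> F" | w' where "{p,q} = {a,w'}" "{b,w'} \<in> F" "w' \<noteq> a"
        unfolding F'_def by blast
      then show "{u,w} \<in> E"
      proof cases
        case 1 then show ?thesis using old pq' by blast
      next
        case 2
        from 2(1) have "(p = a \<and> q = w') \<or> (p = w' \<and> q = a)" by (auto simp: doubleton_eq_iff)
        then show ?thesis
        proof
          assume "p = a \<and> q = w'"
          then have "u = v" using ina u pq' by blast
          then have "b \<in> X u" using ab by simp
          then show ?thesis using old pq' 2(2) \<open>p = a \<and> q = w'\<close> by blast
        next
          assume "p = w' \<and> q = a"
          then have "w = v" using ina w pq' by blast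
          then have "b \<in> X w" using ab by simp
          moreover have "{p, b} \<in> F" using 2(2) \<open>p = w' \<and> q = a\<close> by (simp add: insert_commute)
          ultimately show ?thesis using old pq' by blast
        qed
      qed
    next
      assume "{u,w} \<in> E"
      then obtain p q where pq: "p \<in> X u" "q \<in> X w" "{p,q} \<in> F" using old by blast
      have pqn: "p \<noteq> q" using graph_edge[OF gr pq(3)] by simp
      show "\<exists>p\<in>?X u. \<exists>q\<in>?X w. {p,q} \<in> F'"
      proof (cases "p = b")
        case True
        then have "u = v" using inb u pq by blast
        then have "w \<noteq> v" using uw by simp
        then have "q \<noteq> a" using disj[OF w v] pq ab by blast
        have "q \<noteq> b" using True pqn by simp
        have "{a, q} \<in> F'" unfolding F'_def using pq True \<open>q \<noteq> a\<close> by blast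
        moreover have "a \<in> ?X u" using \<open>u = v\<close> ab abW by simp
        moreover have "q \<in> ?X w" using pq \<open>q \<noteq> b\<close> by auto
        ultimately show ?thesis by blast
      next
        case pb: False
        show ?thesis
        proof (cases "q = b")
          case True
          then have "w = v" using inb w pq by blast
          then have "u \<noteq> v" using uw by simp
          then have "p \<noteq> a" using disj[OF u v] pq ab by blast
          have "{b, p} \<in> F" using pq True by (simp add: insert_commute)
          then have "{a, p} \<in> F'" unfolding F'_def using \<open>p \<noteq> a\<close> by blast
          then have "{p, a} \<in> F'" by (simp add: insert_commute)
          moreover have "a \<in> ?X w" using \<open>w = v\<close> ab abW by simp
          moreover have "p \<in> ?X u" using pq pb by auto
          ultimately show ?thesis by blast
        next
          case False
          then have "{p,q} \<in> F'" using pq pb by (simp add: F'_def)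
          then show ?thesis using pq pb False by auto
        qed
      qed
    qed
  qed
  show ?thesis unfolding good_def using g1 g2 g3 g4 g5 g6 by blast
qed

lemma good_minor:
  assumes "graph V E" "good V E W F X"
  shows "\<exists>G''. contract_step\<^sup>*\<^sup>* (W, F) G'' \<and> isomorphic V E (fst G'') (snd G'')"
  using assms(2)
proof (induction "card W" arbitrary: W F X rule: less_induct)
  case less
  have gr: "graph W F" using less.prems by (simp add: good_def)
  show ?case
  proof (cases "\<exists>v\<in>V. \<exists>a b. a \<in> X v \<and> b \<in> X v \<and> a \<noteq> b")
    case True
    then obtain v a b where v: "v \<in> V" and ab: "a \<in> X v" "b \<in> X v" "a \<noteq> b" by blast
    have "conn (X v) F" using less.prems v by (simp add: good_def)
    then have "(\<lambda>p q. p \<in> X v \<and> q \<in> X v \<and> {p,q} \<in> F)\<^sup>*\<^sup>* a b" using ab by (simp add: conn_def)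
    then obtain c where c: "c \<in> X v" "{a,c} \<in> F"
      using ab(3) by (cases rule: converse_rtranclpE) auto
    define F' where "F' = {e \<in> F. c \<notin> e} \<union> {{a, w} | w. {c, w} \<in> F \<and> w \<noteq> a}"
    have g': "good V E (W - {c}) F' (X(v := X v - {c}))"
      unfolding F'_def by (rule good_step[OF less.prems v ab(1) c])
    have cW: "c \<in> W" "a \<noteq> c" using graph_edge[OF gr c(2)] by auto
    have fin: "finite W" using gr by (simp add: graph_def)
    have lt: "card (W - {c}) < card W" by (rule card_Diff1_less[OF fin cW(1)])
    obtain G'' where G'': "contract_step\<^sup>*\<^sup>* (W - {c}, F') G''" "isomorphic V E (fst G'') (snd G'')"
      using less.hyps[OF lt g'] by blast
    have "(W - {c}, F') = contract (W, F) a c" by (simp add: contract_def F'_def)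
    then have "contract_step (W, F) (W - {c}, F')"
      unfolding contract_step_def using c cW by auto
    then have "contract_step\<^sup>*\<^sup>* (W, F) G''" using G''(1) by (rule converse_rtranclp_into_rtranclp)
    then show ?thesis using G''(2) by blast
  next
    case False
    define g where "g v = (SOME a. a \<in> X v)" for v
    have Xg: "X v = {g v}" if "v \<in> V" for v
    proof -
      have "X v \<noteq> {}" using less.prems that by (simp add: good_def)
      then have "g v \<in> X v" unfolding g_def by (simp add: some_in_eq)
      then show ?thesis using False that by blast
    qed
    have disj: "\<And>u w. u \<in> V \<Longrightarrow> w \<in> V \<Longrightarrow> u \<noteq> w \<Longrightarrow> X u \<inter> X w = {}" using less.prems by (simp add: good_def)
    have cov: "\<Union>(X ` V) = W" using less.prems by (simp add: good_def)
    have bij: "bij_betw g V W"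
      unfolding bij_betw_def
    proof
      show "inj_on g V" unfolding inj_on_def using disj Xg by fastforce
      show "g ` V = W" using cov Xg by auto
    qed
    have edges: "\<forall>u\<in>V. \<forall>v\<in>V. {u, v} \<in> E \<longleftrightarrow> {g u, g v} \<in> F"
    proof (intro ballI)
      fix u v assume u: "u \<in> V" and v: "v \<in> V"
      show "{u, v} \<in> E \<longleftrightarrow> {g u, g v} \<in> F"
      proof (cases "u = v")
        case True then show ?thesis using graph_no_loop[OF assms(1)] graph_no_loop[OF gr] by simp
      next
        case False
        then have "(\<exists>p\<in>X u. \<exists>q\<in>X v. {p,q} \<in> F) \<longleftrightarrow> {u,v} \<in> E" using less.prems u v by (simp add: good_def)
        then show ?thesis using Xg[OF u] Xg[OF v] by simp
      qed
    qed
    have "isomorphic V E W F" unfolding isomorphic_def using bij edges by blast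
    then show ?thesis by (intro exI[of _ "(W, F)"]) simp
  qed
qed

lemma model_minor:
  assumes gV: "graph V E" and gW: "graph W F"
    and ne: "\<forall>v\<in>V. X v \<noteq> {} \<and> X v \<subseteq> W"
    and disj: "\<forall>u\<in>V. \<forall>v\<in>V. u \<noteq> v \<longrightarrow> X u \<inter> X v = {}"
    and cn: "\<forall>v\<in>V. conn (X v) F"
    and ed: "\<forall>u v. {u,v} \<in> E \<longrightarrow> (\<exists>p\<in>X u. \<exists>q\<in>X v. {p,q} \<in> F)"
  shows "minor V E W F"
proof -
  define V' where "V' = \<Union>(X ` V)"
  define \<beta> where "\<beta> p = (SOME v. v \<in> V \<and> p \<in> X v)" for p
  have \<beta>: "\<beta> p = v" if "v \<in> V" "p \<in> X v" for p v
  proof -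
    have "\<beta> p \<in> V \<and> p \<in> X (\<beta> p)" unfolding \<beta>_def by (rule someI[of _ v]) (use that in auto)
    then show ?thesis using disj that by blast
  qed
  define E' where "E' = {{p,q} | p q. {p,q} \<in> F \<and> p \<in> V' \<and> q \<in> V' \<and> (\<beta> p = \<beta> q \<or> {\<beta> p, \<beta> q} \<in> E)}"
  have V'W: "V' \<subseteq> W" using ne V'_def by auto
  have E'F: "E' \<subseteq> F" unfolding E'_def by auto
  have gV': "graph V' E'"
    unfolding graph_def
  proof
    show "finite V'" using V'W gW by (auto simp: graph_def intro: finite_subset)
    show "\<forall>e\<in>E'. \<exists>u v. e = {u, v} \<and> u \<noteq> v \<and> u \<in> V' \<and> v \<in> V'"
      unfolding E'_def using graph_edge[OF gW] by blast
  qed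
  have sub: "subgraph V' E' W F" unfolding subgraph_def using gV' V'W E'F by blast
  have good: "good V E V' E' X"
    unfolding good_def
  proof (intro conjI)
    show "graph V' E'" by (rule gV')
    show "\<forall>v\<in>V. X v \<noteq> {}" using ne by blast
    show "\<Union>(X ` V) = V'" by (simp add: V'_def)
    show "\<forall>u\<in>V. \<forall>v\<in>V. u \<noteq> v \<longrightarrow> X u \<inter> X v = {}" by (rule disj)
    show "\<forall>v\<in>V. conn (X v) E'"
    proof
      fix v assume v: "v \<in> V"
      show "conn (X v) E'" unfolding conn_def
      proof (intro ballI)
        fix x y assume "x \<in> X v" "y \<in> X v"
        then have "(\<lambda>p q. p \<in> X v \<and> q \<in> X v \<and> {p,q} \<in> F)\<^sup>*\<^sup>* x y" using cn v by (simp add: conn_def)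
        then show "(\<lambda>p q. p \<in> X v \<and> q \<in> X v \<and> {p,q} \<in> E')\<^sup>*\<^sup>* x y"
        proof (rule mono_rtranclp[rule_format, rotated])
          fix p q assume "p \<in> X v \<and> q \<in> X v \<and> {p,q} \<in> F"
          moreover then have "\<beta> p = \<beta> q" using \<beta> v by simp
          moreover have "p \<in> V'" "q \<in> V'" using calculation v V'_def by auto
          ultimately show "p \<in> X v \<and> q \<in> X v \<and> {p,q} \<in> E'" unfolding E'_def by blast
        qed
      qed
    qed
    show "\<forall>u\<in>V. \<forall>v\<in>V. u \<noteq> v \<longrightarrow> ((\<exists>p\<in>X u. \<exists>q\<in>X v. {p,q} \<in> E') \<longleftrightarrow> {u,v} \<in> E)"
    proof (intro ballI impI iffI)
      fix u v assume u: "u \<in> V" and v: "v \<in> V" and uv: "u \<noteq> v"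
      {
        assume "\<exists>p\<in>X u. \<exists>q\<in>X v. {p,q} \<in> E'"
        then obtain p q where pq: "p \<in> X u" "q \<in> X v" "{p,q} \<in> E'" by blast
        then obtain p' q' where pq': "{p,q} = {p',q'}" "\<beta> p' = \<beta> q' \<or> {\<beta> p', \<beta> q'} \<in> E"
          unfolding E'_def by blast
        have bp: "\<beta> p = u" "\<beta> q = v" using \<beta> pq u v by auto
        from pq'(1) have "(p' = p \<and> q' = q) \<or> (p' = q \<and> q' = p)" by (auto simp: doubleton_eq_iff)
        then show "{u,v} \<in> E" using pq'(2) bp uv by (auto simp: insert_commute)
      }
      {
        assume "{u,v} \<in> E"
        then obtain p q where pq: "p \<in> X u" "q \<in> X v" "{p,q} \<in> F" using ed by blast
        have bp: "\<beta> p = u" "\<beta> q = v" using \<beta> pq u v by auto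
        have "p \<in> V'" "q \<in> V'" using pq u v V'_def by auto
        then have "{p,q} \<in> E'" unfolding E'_def using pq bp \<open>{u,v} \<in> E\<close> by blast
        then show "\<exists>p\<in>X u. \<exists>q\<in>X v. {p,q} \<in> E'" using pq by blast
      }
    qed
  qed
  obtain G'' where "contract_step\<^sup>*\<^sup>* (V', E') G''" "isomorphic V E (fst G'') (snd G'')"
    using good_minor[OF gV good] by blast
  then show ?thesis unfolding minor_def using sub by blast
qed


lemma walk_rtranclp:
  "walk S Fs xs \<Longrightarrow> (\<lambda>p q. p \<in> S \<and> q \<in> S \<and> {p,q} \<in> Fs)\<^sup>*\<^sup>* (hd xs) (last xs)"
proof (induction xs)
  case Nil then show ?case by (simp add: walk_def)
next
  case (Cons a xs)
  show ?case
  proof (cases xs)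
    case Nil then show ?thesis by simp
  next
    case (Cons b ys)
    have h: "\<forall>i. Suc i < length (a # xs) \<longrightarrow> {(a # xs) ! i, (a # xs) ! Suc i} \<in> Fs"
      and sS: "set (a # xs) \<subseteq> S" using Cons.prems unfolding walk_def by blast+
    have w: "walk S Fs xs" unfolding walk_def
    proof (intro conjI allI impI)
      show "xs \<noteq> []" using Cons by simp
      show "set xs \<subseteq> S" using sS by simp
      fix i assume "Suc i < length xs"
      then have "Suc (Suc i) < length (a # xs)" by simp
      from h[rule_format, OF this] show "{xs ! i, xs ! Suc i} \<in> Fs" by simp
    qed
    have "Suc 0 < length (a # xs)" using Cons by simp
    from h[rule_format, OF this] have e: "{a, b} \<in> Fs" using Cons by simp
    have ab: "a \<in> S" "b \<in> S" using sS Cons by auto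
    have "(\<lambda>p q. p \<in> S \<and> q \<in> S \<and> {p,q} \<in> Fs)\<^sup>*\<^sup>* b (last xs)" using Cons.IH[OF w] Cons by simp
    then have "(\<lambda>p q. p \<in> S \<and> q \<in> S \<and> {p,q} \<in> Fs)\<^sup>*\<^sup>* a (last xs)"
      using e ab by (simp add: converse_rtranclp_into_rtranclp)
    then show ?thesis using Cons by simp
  qed
qed

lemma rtranclp_map:
  "(\<And>x y. R x y \<Longrightarrow> R' (f x) (f y)) \<Longrightarrow> R\<^sup>*\<^sup>* x y \<Longrightarrow> R'\<^sup>*\<^sup>* (f x) (f y)"
proof -
  assume h: "\<And>x y. R x y \<Longrightarrow> R' (f x) (f y)" and r: "R\<^sup>*\<^sup>* x y"
  from r show ?thesis
    by (induction rule: rtranclp_induct) (auto intro: rtranclp.rtrancl_into_rtrancl h)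
qed

locale rtree =
  fixes I :: "nat set" and F :: "nat set set" and \<rho> :: nat
  assumes tr: "tree I F" and root: "\<rho> \<in> I"
begin

definition adj :: "nat \<Rightarrow> nat \<Rightarrow> bool" where "adj p q \<longleftrightarrow> p \<in> I \<and> q \<in> I \<and> {p,q} \<in> F"

definition d :: "nat \<Rightarrow> nat" where "d t = (LEAST m. (adj ^^ m) \<rho> t)"

definition p :: "nat \<Rightarrow> nat" where "p t = (SOME u. adj u t \<and> d u + 1 = d t)"

definition path :: "nat \<Rightarrow> nat list" where "path t = rev (map (\<lambda>m. (p ^^ m) t) [0..<d t])"

lemma gI: "graph I F" using tr by (simp add: tree_def)

lemma finI: "finite I" using gI by (simp add: graph_def)

lemma reach: "t \<in> I \<Longrightarrow> \<exists>m. (adj ^^ m) \<rho> t"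
proof -
  assume t: "t \<in> I"
  have "connected_graph I F" using tr by (simp add: tree_def)
  then obtain xs where "walk I F xs" "hd xs = \<rho>" "last xs = t" using t root by (auto simp: connected_graph_def)
  then have "adj\<^sup>*\<^sup>* \<rho> t" using walk_rtranclp[of I F xs] unfolding adj_def by simp
  then show ?thesis by (simp add: rtranclp_power)
qed

lemma d_spec: "t \<in> I \<Longrightarrow> (adj ^^ d t) \<rho> t"
  unfolding d_def using reach by (rule LeastI_ex)

lemma d_min: "(adj ^^ m) \<rho> t \<Longrightarrow> d t \<le> m"
  unfolding d_def by (rule Least_le)

lemma d_root: "d \<rho> = 0"
  using d_min[of 0 \<rho>] by simp

lemma d_zero: "t \<in> I \<Longrightarrow> d t = 0 \<Longrightarrow> t = \<rho>"
  using d_spec[of t] by simp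

lemma parent_ex: "t \<in> I \<Longrightarrow> t \<noteq> \<rho> \<Longrightarrow> \<exists>u. adj u t \<and> d u + 1 = d t"
proof -
  assume t: "t \<in> I" "t \<noteq> \<rho>"
  then obtain m where m: "d t = Suc m" using d_root d_zero by (cases "d t") auto
  then have "(adj ^^ Suc m) \<rho> t" using d_spec[OF t(1)] by simp
  then obtain u where u: "(adj ^^ m) \<rho> u" "adj u t" by (rule relpowp_Suc_E)
  have "d u \<le> m" using d_min[OF u(1)] .
  moreover have "(adj ^^ Suc (d u)) \<rho> t"
  proof -
    have "u \<in> I" using u(2) by (simp add: adj_def)
    then show ?thesis using relpowp_Suc_I[OF d_spec u(2)] by simp
  qed
  then have "d t \<le> Suc (d u)" by (rule d_min)
  ultimately show ?thesis using u m by (intro exI[of _ u]) simp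
qed

lemma p_spec: "t \<in> I \<Longrightarrow> t \<noteq> \<rho> \<Longrightarrow> adj (p t) t \<and> d (p t) + 1 = d t"
  unfolding p_def using parent_ex by (rule someI_ex)

lemma p_I: "t \<in> I \<Longrightarrow> t \<noteq> \<rho> \<Longrightarrow> p t \<in> I \<and> {t, p t} \<in> F \<and> d (p t) + 1 = d t"
  using p_spec[of t] by (auto simp: adj_def insert_commute)

lemma F_sub: "F \<subseteq> (\<lambda>t. {t, p t}) ` (I - {\<rho>})"
proof -
  let ?P = "(\<lambda>t. {t, p t}) ` (I - {\<rho>})"
  have PF: "?P \<subseteq> F" using p_I by auto
  have inj: "inj_on (\<lambda>t. {t, p t}) (I - {\<rho>})"
  proof (rule inj_onI)
    fix t t' assume t: "t \<in> I - {\<rho>}" and t': "t' \<in> I - {\<rho>}" and e: "{t, p t} = {t', p t'}"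
    show "t = t'"
    proof (rule ccontr)
      assume "t \<noteq> t'"
      then have "t = p t' \<and> p t = t'" using e by (auto simp: doubleton_eq_iff)
      then show False using p_I[of t] p_I[of t'] t t' by auto
    qed
  qed
  have finF: "finite F"
  proof -
    have "F \<subseteq> Pow I"
    proof
      fix e assume "e \<in> F"
      then obtain u v where "e = {u,v}" "u \<in> I" "v \<in> I" using gI unfolding graph_def by blast
      then show "e \<in> Pow I" by simp
    qed
    then show ?thesis using finI by (meson finite_Pow_iff finite_subset)
  qed
  have "card ?P = card (I - {\<rho>})" using inj by (rule card_image)
  also have "\<dots> = card I - 1" using root finI by simp
  also have "\<dots> = card F" using tr by (auto simp: tree_def)
  finally have c: "card ?P = card F" .
  have "?P = F" by (rule card_subset_eq[OF finF PF c])
  then show ?thesis by (rule equalityD2)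
qed

lemma pp: "t \<in> I \<Longrightarrow> m \<le> d t \<Longrightarrow> (p ^^ m) t \<in> I \<and> d ((p ^^ m) t) = d t - m"
proof (induction m)
  case 0 then show ?case by simp
next
  case (Suc m)
  then have ih: "(p ^^ m) t \<in> I" "d ((p ^^ m) t) = d t - m" by auto
  have "(p ^^ m) t \<noteq> \<rho>" using ih Suc.prems d_root by auto
  then show ?case using p_I[of "(p ^^ m) t"] ih Suc.prems by auto
qed

lemma length_path: "length (path t) = d t" by (simp add: path_def)

lemma set_path: "t \<in> I \<Longrightarrow> set (path t) \<subseteq> I"
  using pp by (auto simp: path_def)

lemma path_root: "path \<rho> = []" by (simp add: path_def d_root)

lemma path_step: "t \<in> I \<Longrightarrow> t \<noteq> \<rho> \<Longrightarrow> path t = path (p t) @ [t]"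
proof -
  assume t: "t \<in> I" "t \<noteq> \<rho>"
  have e: "d t = Suc (d (p t))" using p_I[OF t] by simp
  have u: "[0..<Suc (d (p t))] = 0 # map Suc [0..<d (p t)]" by (simp add: map_Suc_upt upt_conv_Cons)
  have m: "map (\<lambda>m. (p ^^ Suc m) t) [0..<d (p t)] = map (\<lambda>m. (p ^^ m) (p t)) [0..<d (p t)]"
    by (simp only: funpow_Suc_right comp_def)
  have "path t = rev (map (\<lambda>m. (p ^^ m) t) (0 # map Suc [0..<d (p t)]))"
    unfolding path_def e u ..
  also have "\<dots> = rev (t # map (\<lambda>m. (p ^^ Suc m) t) [0..<d (p t)])"
    by (simp only: list.map map_map comp_def funpow_0)
  also have "\<dots> = path (p t) @ [t]" unfolding m path_def by simp
  finally show ?thesis .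
qed

lemma path_inj: "t \<in> I \<Longrightarrow> t' \<in> I \<Longrightarrow> path t = path t' \<Longrightarrow> t = t'"
proof -
  assume t: "t \<in> I" and t': "t' \<in> I" and e: "path t = path t'"
  have l: "d t = d t'" using e length_path by metis
  show "t = t'"
  proof (cases "d t = 0")
    case True
    then show ?thesis using d_zero[OF t] d_zero[OF t'] l by metis
  next
    case False
    then have n: "t \<noteq> \<rho>" "t' \<noteq> \<rho>" using l d_root by metis+
    have "last (path t) = t" using path_step[OF t n(1)] by (metis last_snoc)
    moreover have "last (path t') = t'" using path_step[OF t' n(2)] by (metis last_snoc)
    ultimately show ?thesis using e by metis
  qed
qed

end


lemma walk_mono: "walk V' E' xs \<Longrightarrow> V' \<subseteq> V \<Longrightarrow> E' \<subseteq> E \<Longrightarrow> walk V E xs"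
  unfolding walk_def by blast

lemma growth_le:
  assumes g: "graph VT ET"
    and bl: "\<And>c xs. c \<in> VT \<Longrightarrow> walk VT ET xs \<Longrightarrow> hd xs = c \<Longrightarrow> length xs \<le> Suc r \<Longrightarrow> last xs \<in> Bl c"
    and cb: "\<And>c. c \<in> VT \<Longrightarrow> finite (Bl c) \<and> card (Bl c) \<le> b"
  shows "growth VT ET r \<le> b"
proof -
  let ?S = "{card V' | V' E'. subgraph V' E' VT ET \<and> radius_le V' E' r}"
  have le: "\<forall>x\<in>?S. x \<le> b"
  proof
    fix x assume xS: "x \<in> ?S"
    then obtain V' E' where x: "x = card V'" and sub: "subgraph V' E' VT ET" and rad: "radius_le V' E' r"
      by blast
    obtain c where c: "c \<in> V'" "\<forall>v\<in>V'. dist_le V' E' c v r" using rad by (auto simp: radius_le_def)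
    have VV: "V' \<subseteq> VT" "E' \<subseteq> ET" using sub by (auto simp: subgraph_def)
    have cV: "c \<in> VT" using c VV by auto
    have "V' \<subseteq> Bl c"
    proof
      fix v assume "v \<in> V'"
      then obtain xs where "walk V' E' xs" "hd xs = c" "last xs = v" "length xs \<le> Suc r"
        using c by (auto simp: dist_le_def)
      then show "v \<in> Bl c" using bl[OF cV walk_mono[OF _ VV]] by blast
    qed
    then have "card V' \<le> card (Bl c)" using cb[OF cV] by (simp add: card_mono)
    then show "x \<le> b" using x cb[OF cV] by simp
  qed
  have fin: "finite ?S"
  proof -
    have "?S \<subseteq> card ` Pow VT" by (auto simp: subgraph_def)
    moreover have "finite VT" using g by (simp add: graph_def)
    ultimately show ?thesis by (meson finite_Pow_iff finite_imageI finite_subset)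
  qed
  show ?thesis unfolding growth_def using fin le by (simp add: Max_le_iff)
qed

lemma sym_rtranclp: "(\<And>x y. R x y \<Longrightarrow> R y x) \<Longrightarrow> R\<^sup>*\<^sup>* x y \<Longrightarrow> R\<^sup>*\<^sup>* y x"
proof -
  assume s: "\<And>x y. R x y \<Longrightarrow> R y x" and r: "R\<^sup>*\<^sup>* x y"
  from r show ?thesis
    by (induction rule: rtranclp_induct) (auto intro: converse_rtranclp_into_rtranclp s)
qed

lemma rtranclp_lift:
  "(\<And>x y. Q x y \<Longrightarrow> R\<^sup>*\<^sup>* (f x) (f y)) \<Longrightarrow> Q\<^sup>*\<^sup>* x y \<Longrightarrow> R\<^sup>*\<^sup>* (f x) (f y)"
proof -
  assume h: "\<And>x y. Q x y \<Longrightarrow> R\<^sup>*\<^sup>* (f x) (f y)" and r: "Q\<^sup>*\<^sup>* x y"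
  from r show ?thesis
    by (induction rule: rtranclp_induct) (auto intro: rtranclp_trans h)
qed

lemma Dn_incl: "i \<le> r \<Longrightarrow> Dn N Dp ((par N Dp ^^ i) a) (2*i) \<subseteq> Dn N Dp ((par N Dp ^^ r) a) (2*r)"
proof
  fix z assume i: "i \<le> r" and z: "z \<in> Dn N Dp ((par N Dp ^^ i) a) (2*i)"
  have "z \<in> Dn N Dp ((par N Dp ^^ (r - i)) ((par N Dp ^^ i) a)) (2*i + (r - i))"
    using Dn_upn[OF z] .
  moreover have "(par N Dp ^^ (r - i)) ((par N Dp ^^ i) a) = (par N Dp ^^ r) a"
    using i by (simp add: funpow_add[symmetric, THEN fun_cong, simplified comp_def])
  ultimately show "z \<in> Dn N Dp ((par N Dp ^^ r) a) (2*r)"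
    using Dn_mono[of "2*i + (r - i)" "2*r" N Dp "(par N Dp ^^ r) a"] i by auto
qed

lemma td_exists: "graph V E \<Longrightarrow> tree_decomposition V E {0} {} (\<lambda>_. V)"
  unfolding tree_decomposition_def tree_def graph_def connected_graph_def walk_def
  by (auto intro!: exI[of _ "[0::nat]"])

lemma td_obtain:
  assumes "graph V E" "treewidth V E < int k"
  shows "\<exists>I F B. tree_decomposition V E I F B \<and> (\<forall>i\<in>I. card (B i) \<le> k)"
proof -
  let ?P = "\<lambda>w. \<exists>I F B. tree_decomposition V E I F B \<and> (\<forall>i\<in>I. card (B i) \<le> w)"
  have "?P (card V)" using td_exists[OF assms(1)] by blast
  then have P: "?P (LEAST w. ?P w)" by (rule LeastI)
  have "int (LEAST w. ?P w) - 1 < int k" using assms(2) by (simp add: treewidth_def)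
  then have "(LEAST w. ?P w) \<le> k" by simp
  then show ?thesis using P by (meson order_trans)
qed


lemma inj_small: fixes A :: "'a set" assumes fin: "finite A" and c: "card A \<le> k"
  shows "\<exists>f::'a\<Rightarrow>nat. inj_on f A \<and> f ` A \<subseteq> {..<k}"
proof -
  obtain f :: "'a \<Rightarrow> nat" and n where f: "f ` A = {i. i < n}" "inj_on f A"
    using finite_imp_inj_to_nat_seg[OF fin] by blast
  have "n = card (f ` A)" using f(1) by simp
  also have "\<dots> = card A" using f(2) by (simp add: card_image)
  finally have "n \<le> k" using c by simp
  then have "f ` A \<subseteq> {..<k}" using f(1) by auto
  then show ?thesis using f(2) by blast
qed

lemma construction:
  fixes V :: "'a set" and E :: "'a set set" and I :: "nat set" and F :: "nat set set" and B :: "nat \<Rightarrow> 'a set"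
    and k :: nat
  assumes gV: "graph V E" and kpos: "0 < k" and td: "tree_decomposition V E I F B"
    and bags: "\<forall>i\<in>I. card (B i) \<le> k"
  shows "\<exists>(VT::nat set) ET. graph VT ET \<and> minor V E VT ET \<and> (\<forall>r. 0 < r \<longrightarrow> growth VT ET r \<le> k * (10 * r + 2))"
proof -
  have trI: "tree I F" using td by (simp add: tree_decomposition_def)
  have Ine: "I \<noteq> {}" using trI by (auto simp: tree_def)
  obtain \<rho> where root: "\<rho> \<in> I" using Ine by blast
  interpret T: rtree I F \<rho> using trI root by unfold_locales
  define N where "N = Suc (Max I)"
  define Dp where "Dp = Max (T.d ` I)"
  have tN: "t < N" if "t \<in> I" for t
  proof -
    have "t \<le> Max I" by (rule Max_ge[OF T.finI that])
    then show ?thesis unfolding N_def by (rule le_imp_less_Suc)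
  qed
  have dDp: "T.d t \<le> Dp" if "t \<in> I" for t
    unfolding Dp_def by (rule Max_ge[OF finite_imageI[OF T.finI] imageI[OF that]])
  have BV: "B t \<subseteq> V" if "t \<in> I" for t using td that by (simp add: tree_decomposition_def)
  have finV: "finite V" using gV by (simp add: graph_def)
  have idx_ex: "\<exists>f::'a \<Rightarrow> nat. inj_on f (B t) \<and> f ` B t \<subseteq> {..<k}" if "t \<in> I" for t
  proof -
    have fin: "finite (B t)" using BV[OF that] finV by (rule finite_subset)
    show ?thesis using inj_small[OF fin] bags that by blast
  qed
  define idx where "idx t = (SOME f. inj_on f (B t) \<and> f ` B t \<subseteq> {..<k})" for t
  have idx: "inj_on (idx t) (B t) \<and> idx t ` B t \<subseteq> {..<k}" if "t \<in> I" for t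
    unfolding idx_def using idx_ex[OF that] by (rule someI_ex)
  define W0 where "W0 = UV N Dp \<times> {..<k}"
  define adj0 where "adj0 x y \<longleftrightarrow> (fst x = fst y \<and> snd x \<noteq> snd y) \<or>
      (fst x \<noteq> fst y \<and> (par N Dp (fst x) = fst y \<or> par N Dp (fst y) = fst x))"
    for x y :: "(nat list \<times> nat) \<times> nat"
  have finW0: "finite W0" unfolding W0_def using finite_UV by simp
  obtain enc :: "(nat list \<times> nat) \<times> nat \<Rightarrow> nat" where enc: "inj_on enc W0"
    using finite_imp_inj_to_nat_seg[OF finW0] by blast
  define VT where "VT = enc ` W0"
  define ET where "ET = {{enc x, enc y} | x y. x \<in> W0 \<and> y \<in> W0 \<and> adj0 x y}"
  have adj0_ne: "x \<noteq> y" if "adj0 x y" for x y using that by (auto simp: adj0_def)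
  have adj0_sym: "adj0 y x" if "adj0 x y" for x y using that by (auto simp: adj0_def)
  have ET_I: "{enc x, enc y} \<in> ET" if "x \<in> W0" "y \<in> W0" "adj0 x y" for x y
    using that unfolding ET_def by blast
  have gT: "graph VT ET"
    unfolding graph_def
  proof
    show "finite VT" using finW0 by (simp add: VT_def)
    show "\<forall>e\<in>ET. \<exists>u v. e = {u, v} \<and> u \<noteq> v \<and> u \<in> VT \<and> v \<in> VT"
    proof
      fix e assume "e \<in> ET"
      then obtain x y where e: "e = {enc x, enc y}" "x \<in> W0" "y \<in> W0" "adj0 x y" unfolding ET_def by blast
      have "enc x \<noteq> enc y" using adj0_ne[OF e(4)] enc e(2,3) by (meson inj_on_eq_iff)
      then show "\<exists>u v. e = {u, v} \<and> u \<noteq> v \<and> u \<in> VT \<and> v \<in> VT" using e by (auto simp: VT_def)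
    qed
  qed

  have node_UV: "(T.path t, j) \<in> UV N Dp" if "t \<in> I" "j < qlen N (Dp - T.d t)" for t j
    using that T.length_path[of t] T.set_path[of t] dDp[of t] tN by (auto simp: UV_def)
  define S where "S v = {((T.path t, j), idx t v) | t j. t \<in> I \<and> v \<in> B t \<and> j < qlen N (Dp - T.d t)}" for v
  have SW: "S v \<subseteq> W0" for v
    using node_UV idx unfolding S_def W0_def by fastforce
  have par_path: "par N Dp (T.path s, 0) = (T.path (T.p s), att N (Dp - T.d (T.p s)) s)"
    if "s \<in> I" "s \<noteq> \<rho>" for s
  proof -
    have ps: "T.path s = T.path (T.p s) @ [s]" using T.path_step[OF that] .
    have d: "T.d (T.p s) + 1 = T.d s" using T.p_I[OF that] by simp
    have "Dp - length (T.path s) + 1 = Dp - T.d (T.p s)" using dDp[OF that(1)] d T.length_path[of s] by simp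
    then show ?thesis using ps by (simp add: par_def)
  qed
  have qpos: "0 < qlen N h" for h by (simp add: qlen_def)

  have conn: "conn (enc ` S v) ET" if v: "v \<in> V" for v
  proof -
    define R where "R x y \<longleftrightarrow> x \<in> S v \<and> y \<in> S v \<and> adj0 x y" for x y
    define anc where "anc t = ((T.path t, 0::nat), idx t v)" for t
    have Rsym: "R y x" if "R x y" for x y using that adj0_sym by (auto simp: R_def)
    have inner: "R\<^sup>*\<^sup>* ((T.path t, j), idx t v) (anc t)"
      if "t \<in> I" "v \<in> B t" "j < qlen N (Dp - T.d t)" for t j
      using that(3)
    proof (induction j)
      case 0 then show ?case by (simp add: anc_def)
    next
      case (Suc j)
      have "R ((T.path t, Suc j), idx t v) ((T.path t, j), idx t v)"
        unfolding R_def adj0_def S_def using that(1,2) Suc.prems by (auto simp: par_def)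
      then show ?case using Suc by (meson Suc_lessD converse_rtranclp_into_rtranclp)
    qed
    have estep: "R\<^sup>*\<^sup>* (anc s) (anc (T.p s))"
      if s: "s \<in> I" "s \<noteq> \<rho>" "v \<in> B s" "v \<in> B (T.p s)" for s
    proof -
      have pI: "T.p s \<in> I" using T.p_I[OF s(1,2)] by simp
      have "par N Dp (T.path s, 0) \<in> UV N Dp" using par_UV node_UV[OF s(1) qpos] by blast
      then have att: "att N (Dp - T.d (T.p s)) s < qlen N (Dp - T.d (T.p s))"
        using par_path[OF s(1,2)] T.length_path[of "T.p s"] by (simp add: UV_def)
      let ?y = "((T.path (T.p s), att N (Dp - T.d (T.p s)) s), idx (T.p s) v)"
      have yS: "?y \<in> S v" unfolding S_def using pI s(4) att by blast
      have aS: "anc s \<in> S v" unfolding S_def anc_def using s(1,3) qpos by blast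
      have neq: "T.path s \<noteq> T.path (T.p s)"
        using T.length_path[of s] T.length_path[of "T.p s"] T.p_I[OF s(1,2)] by auto
      have "R (anc s) ?y" unfolding R_def using aS yS neq par_path[OF s(1,2)] by (simp add: adj0_def anc_def)
      moreover have "R\<^sup>*\<^sup>* ?y (anc (T.p s))" using inner[OF pI s(4) att] .
      ultimately show ?thesis by (rule converse_rtranclp_into_rtranclp)
    qed
    define Tv where "Tv = {i \<in> I. v \<in> B i}"
    define Q where "Q a b \<longleftrightarrow> a \<in> Tv \<and> b \<in> Tv \<and> {a, b} \<in> {f \<in> F. f \<subseteq> Tv}" for a b
    have Qstep: "R\<^sup>*\<^sup>* (anc a) (anc b)" if "Q a b" for a b
    proof -
      have "{a,b} \<in> F" and ab: "a \<in> Tv" "b \<in> Tv" using that by (auto simp: Q_def)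
      then obtain s where s: "s \<in> I" "s \<noteq> \<rho>" "{a,b} = {s, T.p s}" using T.F_sub by blast
      then have "(a = s \<and> b = T.p s) \<or> (a = T.p s \<and> b = s)" by (auto simp: doubleton_eq_iff)
      then show ?thesis
      proof
        assume "a = s \<and> b = T.p s"
        then show ?thesis using estep[OF s(1,2)] ab by (auto simp: Tv_def)
      next
        assume "a = T.p s \<and> b = s"
        then show ?thesis using estep[OF s(1,2)] ab sym_rtranclp[of R, OF Rsym] by (auto simp: Tv_def)
      qed
    qed
    have anc_conn: "R\<^sup>*\<^sup>* (anc a) (anc b)" if abT: "a \<in> Tv" "b \<in> Tv" for a b
    proof -
      have "connected_graph Tv {f \<in> F. f \<subseteq> Tv}" using td v by (simp add: tree_decomposition_def Tv_def)
      then obtain xs where xs: "walk Tv {f \<in> F. f \<subseteq> Tv} xs" "hd xs = a" "last xs = b"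
        using abT unfolding connected_graph_def by blast
      have "Q\<^sup>*\<^sup>* a b" using walk_rtranclp[OF xs(1)] xs(2,3) unfolding Q_def by simp
      then show ?thesis using Qstep by (rule rtranclp_lift[rotated])
    qed
    have Rall: "R\<^sup>*\<^sup>* x y" if xyS: "x \<in> S v" "y \<in> S v" for x y
    proof -
      obtain t j where x: "x = ((T.path t, j), idx t v)" "t \<in> I" "v \<in> B t" "j < qlen N (Dp - T.d t)"
        using xyS(1) unfolding S_def by blast
      obtain t' j' where y: "y = ((T.path t', j'), idx t' v)" "t' \<in> I" "v \<in> B t'" "j' < qlen N (Dp - T.d t')"
        using xyS(2) unfolding S_def by blast
      have "R\<^sup>*\<^sup>* x (anc t)" using inner[OF x(2,3,4)] x(1) by simp
      moreover have "R\<^sup>*\<^sup>* (anc t) (anc t')" using anc_conn x(2,3) y(2,3) by (simp add: Tv_def)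
      moreover have "R\<^sup>*\<^sup>* (anc t') y" using sym_rtranclp[of R, OF Rsym inner[OF y(2,3,4)]] y(1) by simp
      ultimately show ?thesis by (meson rtranclp_trans)
    qed
    show ?thesis unfolding conn_def
    proof (intro ballI)
      fix x' y' assume "x' \<in> enc ` S v" "y' \<in> enc ` S v"
      then obtain x y where xy: "x' = enc x" "y' = enc y" "x \<in> S v" "y \<in> S v" by blast
      have "(\<lambda>p q. p \<in> enc ` S v \<and> q \<in> enc ` S v \<and> {p,q} \<in> ET)\<^sup>*\<^sup>* (enc x) (enc y)"
      proof (rule rtranclp_map[OF _ Rall[OF xy(3,4)]])
        fix a b assume "R a b"
        then show "enc a \<in> enc ` S v \<and> enc b \<in> enc ` S v \<and> {enc a, enc b} \<in> ET"
          using ET_I SW unfolding R_def by blast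
      qed
      then show "(\<lambda>p q. p \<in> enc ` S v \<and> q \<in> enc ` S v \<and> {p,q} \<in> ET)\<^sup>*\<^sup>* x' y'" using xy by simp
    qed
  qed

  have minor: "minor V E VT ET"
  proof (rule model_minor[OF gV gT, of "\<lambda>v. enc ` S v"])
    show "\<forall>v\<in>V. enc ` S v \<noteq> {} \<and> enc ` S v \<subseteq> VT"
    proof
      fix v assume v: "v \<in> V"
      then obtain t where "t \<in> I" "v \<in> B t" using td by (auto simp: tree_decomposition_def)
      then have "((T.path t, 0), idx t v) \<in> S v" unfolding S_def using qpos by blast
      then show "enc ` S v \<noteq> {} \<and> enc ` S v \<subseteq> VT" using SW by (auto simp: VT_def)
    qed
    show "\<forall>u\<in>V. \<forall>v\<in>V. u \<noteq> v \<longrightarrow> enc ` S u \<inter> enc ` S v = {}"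
    proof (intro ballI impI)
      fix u v assume "u \<in> V" "v \<in> V" "u \<noteq> v"
      show "enc ` S u \<inter> enc ` S v = {}"
      proof (rule ccontr)
        assume "enc ` S u \<inter> enc ` S v \<noteq> {}"
        then obtain x y where xy: "x \<in> S u" "y \<in> S v" "enc x = enc y" by blast
        then have "x = y" using SW enc by (meson inj_on_eq_iff subsetD)
        obtain t j where x: "x = ((T.path t, j), idx t u)" "t \<in> I" "u \<in> B t"
          using xy(1) unfolding S_def by blast
        obtain t' j' where y: "y = ((T.path t', j'), idx t' v)" "t' \<in> I" "v \<in> B t'"
          using xy(2) unfolding S_def by blast
        have "t = t'" using T.path_inj[OF x(2) y(2)] \<open>x = y\<close> x(1) y(1) by simp
        then have "idx t u = idx t v" using \<open>x = y\<close> x(1) y(1) by simp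
        then have "u = v" using idx[OF x(2)] x(3) y(3) \<open>t = t'\<close> by (meson inj_on_eq_iff)
        then show False using \<open>u \<noteq> v\<close> by simp
      qed
    qed
    show "\<forall>v\<in>V. conn (enc ` S v) ET" using conn by blast
    show "\<forall>u v. {u, v} \<in> E \<longrightarrow> (\<exists>p\<in>enc ` S u. \<exists>q\<in>enc ` S v. {p, q} \<in> ET)"
    proof (intro allI impI)
      fix u v assume e: "{u, v} \<in> E"
      then have uv: "u \<noteq> v" "u \<in> V" "v \<in> V" using graph_edge[OF gV e] by auto
      obtain t where t: "t \<in> I" "{u,v} \<subseteq> B t" using td e by (auto simp: tree_decomposition_def)
      let ?x = "((T.path t, 0), idx t u)" and ?y = "((T.path t, 0), idx t v)"
      have xS: "?x \<in> S u" and yS: "?y \<in> S v" unfolding S_def using t qpos by blast+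
      have "idx t u \<noteq> idx t v" using idx[OF t(1)] t(2) uv(1) by (meson inj_on_eq_iff insert_subset)
      then have "adj0 ?x ?y" by (simp add: adj0_def)
      then have "{enc ?x, enc ?y} \<in> ET" using ET_I SW xS yS by blast
      then show "\<exists>p\<in>enc ` S u. \<exists>q\<in>enc ` S v. {p, q} \<in> ET" using xS yS by blast
    qed
  qed

  have growth: "growth VT ET r \<le> k * (10 * r + 2)" if rpos: "0 < r" for r
  proof -
    define dec where "dec = inv_into W0 enc"
    have dec: "dec (enc x) = x" if "x \<in> W0" for x using enc that by (simp add: dec_def)
    define Bl where "Bl c = enc ` (Dn N Dp ((par N Dp ^^ r) (fst (dec c))) (2*r) \<times> {..<k})" for c
    show ?thesis
    proof (rule growth_le[OF gT, of r Bl])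
      fix c xs assume c: "c \<in> VT" and w: "walk VT ET xs" and hc: "hd xs = c" and len: "length xs \<le> Suc r"
      have ne: "xs \<noteq> []" using w by (simp add: walk_def)
      have inW: "dec (xs ! i) \<in> W0 \<and> enc (dec (xs ! i)) = xs ! i" if "i < length xs" for i
      proof -
        have "xs ! i \<in> VT" using w that by (auto simp: walk_def)
        then obtain x where "x \<in> W0" "xs ! i = enc x" by (auto simp: VT_def)
        then show ?thesis using dec by simp
      qed
      define us where "us = map (\<lambda>x. fst (dec x)) xs"
      have uv: "\<forall>i<length us. us ! i \<in> UV N Dp"
      proof (intro allI impI)
        fix i assume i: "i < length us"
        then have "dec (xs ! i) \<in> UV N Dp \<times> {..<k}" using inW by (simp add: us_def W0_def)
        then show "us ! i \<in> UV N Dp" using i by (simp add: us_def mem_Times_iff)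
      qed
      have st: "\<forall>i. Suc i < length us \<longrightarrow> us ! Suc i = us ! i \<or> par N Dp (us ! i) = us ! Suc i \<or> par N Dp (us ! Suc i) = us ! i"
      proof (intro allI impI)
        fix i assume i: "Suc i < length us"
        then have "{xs ! i, xs ! Suc i} \<in> ET" using w by (auto simp: walk_def us_def)
        then obtain x y where xy: "{xs ! i, xs ! Suc i} = {enc x, enc y}" "x \<in> W0" "y \<in> W0" "adj0 x y"
          unfolding ET_def by blast
        have "(xs ! i = enc x \<and> xs ! Suc i = enc y) \<or> (xs ! i = enc y \<and> xs ! Suc i = enc x)"
          using xy(1) by (auto simp: doubleton_eq_iff)
        moreover have "dec (enc x) = x" "dec (enc y) = y" using dec xy(2,3) by blast+
        ultimately have "adj0 (dec (xs ! i)) (dec (xs ! Suc i))" using xy(4) adj0_sym[OF xy(4)] by auto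
        then show "us ! Suc i = us ! i \<or> par N Dp (us ! i) = us ! Suc i \<or> par N Dp (us ! Suc i) = us ! i"
          using i by (auto simp: us_def adj0_def)
      qed
      define i where "i = length xs - 1"
      have il: "i < length us" "i \<le> r" using ne len by (auto simp: i_def us_def)
      have "us ! i \<in> Dn N Dp ((par N Dp ^^ i) (us ! 0)) (2 * i)" using lazy_walk_Dn[OF uv st il(1)] .
      moreover have "us ! 0 = fst (dec c)" using ne hc by (simp add: us_def hd_conv_nth)
      ultimately have "us ! i \<in> Dn N Dp ((par N Dp ^^ r) (fst (dec c))) (2 * r)" using Dn_incl[OF il(2), of N Dp "fst (dec c)"] by auto
      moreover have "last xs = xs ! i" using ne by (simp add: i_def last_conv_nth)
      moreover have "dec (xs ! i) \<in> W0" "enc (dec (xs ! i)) = xs ! i" using inW il(1) by (auto simp: us_def)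
      ultimately show "last xs \<in> Bl c" unfolding Bl_def us_def using il(1)
        by (auto simp: W0_def us_def intro!: image_eqI[of _ enc "dec (xs ! i)"])
    next
      fix c assume c: "c \<in> VT"
      let ?a = "(par N Dp ^^ r) (fst (dec c))"
      have "dec c \<in> W0" using c dec by (auto simp: VT_def)
      then have "?a \<in> UV N Dp" using parpow_UV by (auto simp: W0_def)
      then have la: "length (fst ?a) \<le> Dp" by (cases ?a) (auto simp: UV_def)
      have "card (Dn N Dp ?a (2*r)) \<le> 5 * (2*r) + 2" using Dn_lin[OF la, of N "snd ?a" "2*r"] by simp
      moreover have "card (Bl c) \<le> card (Dn N Dp ?a (2*r) \<times> {..<k})" unfolding Bl_def
        by (rule card_image_le) (simp add: finite_Dn)
      moreover have "card (Dn N Dp ?a (2*r) \<times> {..<k}) = card (Dn N Dp ?a (2*r)) * k" by (simp add: card_cartesian_product)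
      ultimately have "card (Bl c) \<le> (5 * (2*r) + 2) * k"
        using mult_le_mono1[of "card (Dn N Dp ?a (2*r))" "5 * (2*r) + 2" k] by linarith
      moreover have "finite (Bl c)" unfolding Bl_def by (simp add: finite_Dn)
      ultimately show "finite (Bl c) \<and> card (Bl c) \<le> k * (10 * r + 2)" by (simp add: mult.commute)
    qed
  qed
  show ?thesis using gT minor growth by blast
qed


theorem corollary18:
  fixes k :: nat and \<epsilon> :: real and V :: "'a set" and E :: "'a set set"
  assumes "k > 0" and "\<epsilon> > 0"
    and "graph V E" and "treewidth V E < int k"
  shows "\<exists>(VT :: nat set) ET. graph VT ET \<and> minor V E VT ET \<and>
           (\<forall>r::nat. r > 0 \<longrightarrow> real (growth VT ET r) \<le> (162 * (real k + 1) + \<epsilon>) * real r + 1)"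
proof -
  obtain I F B where td: "tree_decomposition V E I F B" "\<forall>i\<in>I. card (B i) \<le> k"
    using td_obtain[OF assms(3,4)] by blast
  obtain VT :: "nat set" and ET where c: "graph VT ET" "minor V E VT ET"
      "\<forall>r. 0 < r \<longrightarrow> growth VT ET r \<le> k * (10 * r + 2)"
    using construction[OF assms(3) assms(1) td] by blast
  have "real (growth VT ET r) \<le> (162 * (real k + 1) + \<epsilon>) * real r + 1" if r: "0 < r" for r :: nat
  proof -
    have g: "growth VT ET r \<le> k * (10 * r + 2)" using c(3) r by blast
    have "k * (10 * r + 2) \<le> 162 * (k + 1) * r"
    proof -
      have "2 \<le> r * 152" using r by simp
      then have "k * 2 \<le> k * (r * 152)" by (rule mult_le_mono2)
      moreover have "k * (10 * r + 2) = 10 * (k * r) + k * 2" by (simp add: algebra_simps)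
      moreover have "162 * (k + 1) * r = 162 * (k * r) + 162 * r" by (simp add: algebra_simps)
      moreover have "k * (r * 152) = 152 * (k * r)" by (simp add: algebra_simps)
      ultimately show ?thesis by linarith
    qed
    then have "growth VT ET r \<le> 162 * (k + 1) * r" using g by linarith
    then have "real (growth VT ET r) \<le> real (162 * (k + 1) * r)" by (simp only: of_nat_le_iff)
    moreover have "real (162 * (k + 1) * r) = 162 * (real k + 1) * real r" by simp
    moreover have "0 \<le> \<epsilon> * real r" using assms(2) by simp
    moreover have "(162 * (real k + 1) + \<epsilon>) * real r = 162 * (real k + 1) * real r + \<epsilon> * real r"
      by (simp only: distrib_right)
    ultimately show ?thesis by linarith
  qed
  then show ?thesis using c(1,2) by blast
qed

end
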